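(* Let $(\mathcal{X},c)$ be a metric space with diameter at most $1$, let $\mu,\nu,\nu'$ be probability distributions on $\mathcal{X}$, and let $p\ge1$, $k\ge 0$, $\delta\in(0,1)$. Let $\tilde\nu=(1-\delta)\nu+\delta\nu'$. Then $$\mathrm{RPW}_{p,k}(\mu,\nu)-\delta\le\mathrm{RPW}_{p,k}(\mu,\tilde\nu)\le(1-\delta)\,\mathrm{RPW}_{p,k}(\mu,\nu)+\delta.$$
   Context: $(\mathcal{X},c)$ is a metric space with $c(x,y)\le 1$ for all $x,y$; distributions are Borel probability measures. For $p\in[1,\infty)$ and $\alpha\in[0,1]$, a partial transport plan of mass $\alpha$ between $\mu$ and $\nu$ is a nonnegative measure $\gamma$ on $\mathcal{X}\times\mathcal{X}$ of total mass $\alpha$ with first marginal $\le\mu$ and second marginal $\le\nu$ (setwise); its cost is $w_p(\gamma)=(\int c^p\,d\gamma)^{1/p}$. $W_{p,\alpha}(\mu,\nu)$ is the infimum of $w_p(\gamma)$ over such $\gamma$. For $k\ge0$, $\mathrm{RPW}_{p,k}(\mu,\nu)=\inf\{\varepsilon\in[0,1]: W_{p,1-\varepsilon}(\mu,\nu)\le k\varepsilon\}$. *)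

theory Defs
  imports "HOL-Probability.Probability"
begin

text \<open>The cost function c is the metric dist of the type 'a.\<close>

definition partial_plan :: "real \<Rightarrow> 'a::metric_space measure \<Rightarrow> 'a measure \<Rightarrow> ('a \<times> 'a) measure \<Rightarrow> bool" where
  "partial_plan \<alpha> \<mu> \<nu> \<gamma> \<longleftrightarrow>
     sets \<gamma> = sets (borel :: ('a \<times> 'a) measure) \<and>
     emeasure \<gamma> (space \<gamma>) = ennreal \<alpha> \<and>
     (\<forall>A \<in> sets (borel :: 'a measure). emeasure \<gamma> (A \<times> UNIV) \<le> emeasure \<mu> A) \<and>
     (\<forall>A \<in> sets (borel :: 'a measure). emeasure \<gamma> (UNIV \<times> A) \<le> emeasure \<nu> A)"

definition plan_cost :: "real \<Rightarrow> ('a::metric_space \<times> 'a) measure \<Rightarrow> real" where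
  "plan_cost p \<gamma> = (enn2real (\<integral>\<^sup>+ z. ennreal ((dist (fst z) (snd z)) powr p) \<partial>\<gamma>)) powr (1 / p)"

text \<open>Partial Wasserstein cost W_{p,alpha}; infimum over an empty set is top.\<close>
definition partial_W :: "real \<Rightarrow> real \<Rightarrow> 'a::metric_space measure \<Rightarrow> 'a measure \<Rightarrow> ennreal" where
  "partial_W p \<alpha> \<mu> \<nu> = (INF \<gamma> \<in> {\<gamma>. partial_plan \<alpha> \<mu> \<nu> \<gamma>}. ennreal (plan_cost p \<gamma>))"

definition RPW :: "real \<Rightarrow> real \<Rightarrow> 'a::metric_space measure \<Rightarrow> 'a measure \<Rightarrow> real" where
  "RPW p k \<mu> \<nu> = Inf {\<epsilon> \<in> {0..1}. partial_W p (1 - \<epsilon>) \<mu> \<nu> \<le> ennreal (k * \<epsilon>)}"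

end

theory Submission
  imports Defs
begin

lemma le_measure_setsI:
  assumes "sets M = sets N" "\<And>A. A \<in> sets M \<Longrightarrow> emeasure M A \<le> emeasure N A"
  shows "M \<le> N"
proof -
  have "space M = space N" using assms(1) by (rule sets_eq_imp_space_eq)
  moreover have "emeasure M \<le> emeasure N"
    unfolding le_fun_def using assms by (metis emeasure_notin_sets order_refl)
  ultimately show ?thesis using assms(1) by (simp add: le_measure_iff)
qed

lemma snd_meas: "(snd :: ('a::metric_space \<times> 'a) \<Rightarrow> 'a) \<in> borel_measurable borel"
  by (intro borel_measurable_continuous_onI continuous_intros)

lemma fst_meas: "(fst :: ('a::metric_space \<times> 'a) \<Rightarrow> 'a) \<in> borel_measurable borel"
  by (intro borel_measurable_continuous_onI continuous_intros)

lemma cost_mono: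
  fixes \<gamma> \<gamma>' :: "('a::metric_space \<times> 'a) measure"
  assumes diam: "\<forall>x y :: 'a. dist x y \<le> 1" and p: "p > 0"
    and s: "sets \<gamma>' = sets \<gamma>" and le: "\<gamma>' \<le> \<gamma>" and fin: "emeasure \<gamma> (space \<gamma>) < \<infinity>"
  shows "plan_cost p \<gamma>' \<le> plan_cost p \<gamma>"
proof -
  let ?f = "\<lambda>z::'a\<times>'a. ennreal ((dist (fst z) (snd z)) powr p)"
  have 1: "integral\<^sup>N \<gamma>' ?f \<le> integral\<^sup>N \<gamma> ?f"
    by (rule nn_integral_mono_measure[OF s le])
  have "integral\<^sup>N \<gamma> ?f \<le> (\<integral>\<^sup>+ z. 1 \<partial>\<gamma>)"
  proof (rule nn_integral_mono)
    fix z :: "'a \<times> 'a"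
    have "dist (fst z) (snd z) powr p \<le> 1 powr p"
      by (rule powr_mono2) (use diam p in auto)
    then show "?f z \<le> 1" by (simp add: ennreal_le_1)
  qed
  also have "\<dots> < \<infinity>" using fin by simp
  finally have 2: "integral\<^sup>N \<gamma> ?f < \<infinity>" .
  have "enn2real (integral\<^sup>N \<gamma>' ?f) \<le> enn2real (integral\<^sup>N \<gamma> ?f)"
    using 1 2 by (intro enn2real_mono) auto
  then show ?thesis unfolding plan_cost_def
    by (intro powr_mono2) (use p in auto)
qed

lemma KL:
  fixes \<mu> \<nu> \<nu>' \<nu>t :: "'a::metric_space measure" and \<gamma> :: "('a \<times> 'a) measure"
  assumes diam: "\<forall>x y :: 'a. dist x y \<le> 1" and p: "p > 0"
    and nu: "prob_space \<nu>" "sets \<nu> = sets (borel :: 'a measure)"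
    and nu': "prob_space \<nu>'" "sets \<nu>' = sets (borel :: 'a measure)"
    and delta: "0 < \<delta>" "\<delta> < 1"
    and nut_sets: "sets \<nu>t = sets (borel :: 'a measure)"
    and nut: "\<forall>A \<in> sets (borel :: 'a measure).
               emeasure \<nu>t A = ennreal (1 - \<delta>) * emeasure \<nu> A + ennreal \<delta> * emeasure \<nu>' A"
    and eps: "0 \<le> \<epsilon>" "\<epsilon> + \<delta> \<le> 1"
    and plan: "partial_plan (1 - \<epsilon>) \<mu> \<nu>t \<gamma>"
  shows "\<exists>\<gamma>''. partial_plan (1 - (\<epsilon> + \<delta>)) \<mu> \<nu> \<gamma>'' \<and> plan_cost p \<gamma>'' \<le> plan_cost p \<gamma>"
proof -
  have gs: "sets \<gamma> = sets borel" and gm: "emeasure \<gamma> (space \<gamma>) = ennreal (1 - \<epsilon>)"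
    and g1: "\<And>A. A \<in> sets borel \<Longrightarrow> emeasure \<gamma> (A \<times> UNIV) \<le> emeasure \<mu> A"
    and g2: "\<And>A. A \<in> sets borel \<Longrightarrow> emeasure \<gamma> (UNIV \<times> A) \<le> emeasure \<nu>t A"
    using plan unfolding partial_plan_def by auto
  have gsp: "space \<gamma> = UNIV" using sets_eq_imp_space_eq[OF gs] by simp
  have nutsp: "space \<nu>t = UNIV" using sets_eq_imp_space_eq[OF nut_sets] by simp
  have nusp: "space \<nu> = UNIV" using sets_eq_imp_space_eq[OF nu(2)] by simp
  have nu'sp: "space \<nu>' = UNIV" using sets_eq_imp_space_eq[OF nu'(2)] by simp
  have nu1: "emeasure \<nu> UNIV = 1" using prob_space.emeasure_space_1[OF nu(1)] nusp by simp
  have nu'1: "emeasure \<nu>' UNIV = 1" using prob_space.emeasure_space_1[OF nu'(1)] nu'sp by simp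
  have nut1: "emeasure \<nu>t UNIV = 1"
    using nut nu1 nu'1 delta by (simp add: ennreal_plus[symmetric] del: ennreal_plus)
  have nutA: "ennreal (1 - \<delta>) * emeasure \<nu> A \<le> emeasure \<nu>t A" if "A \<in> sets borel" for A
    using nut that by (metis add_increasing2 le_add_same_cancel1 le_iff_add zero_le)
  interpret F: finite_measure \<nu>t
    by (rule finite_measureI) (simp add: nutsp nut1)
  define N where "N = scale_measure (ennreal (1 - \<delta>)) \<nu>"
  have Ns: "sets N = sets \<nu>t" unfolding N_def using nu(2) nut_sets by simp
  have ac: "absolutely_continuous \<nu>t N"
    unfolding absolutely_continuous_def
  proof
    fix A assume "A \<in> null_sets \<nu>t"
    then have A: "A \<in> sets borel" "emeasure \<nu>t A = 0" using nut_sets by auto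
    then have "emeasure N A = 0" using nutA[OF A(1)] unfolding N_def by simp
    then show "A \<in> null_sets N" using A Ns nut_sets by auto
  qed
  define h where "h = RN_deriv \<nu>t N"
  have hm: "h \<in> borel_measurable borel" unfolding h_def
    using borel_measurable_RN_deriv[of \<nu>t N] measurable_cong_sets[OF nut_sets refl] by blast
  have hm': "h \<in> borel_measurable \<nu>t" unfolding h_def by (rule borel_measurable_RN_deriv)
  have dens: "density \<nu>t h = N" unfolding h_def by (rule F.density_RN_deriv[OF ac Ns])
  have hA: "(\<integral>\<^sup>+ y. h y * indicator A y \<partial>\<nu>t) = ennreal (1 - \<delta>) * emeasure \<nu> A"
    if "A \<in> sets borel" for A
  proof -
    have "(\<integral>\<^sup>+ y. h y * indicator A y \<partial>\<nu>t) = emeasure (density \<nu>t h) A"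
      using that nut_sets by (subst emeasure_density[OF hm']) auto
    then show ?thesis using dens unfolding N_def by simp
  qed
  define B where "B = {y. 1 < h y}"
  have Bs: "B \<in> sets borel" unfolding B_def using hm by measurable
  have B0: "emeasure \<nu>t B = 0"
  proof (rule ccontr)
    assume nz: "emeasure \<nu>t B \<noteq> 0"
    have "(\<integral>\<^sup>+ y. indicator B y \<partial>\<nu>t) < (\<integral>\<^sup>+ y. h y * indicator B y \<partial>\<nu>t)"
    proof (rule nn_integral_less)
      have Bs': "B \<in> sets \<nu>t" using Bs nut_sets by simp
      show "indicator B \<in> borel_measurable \<nu>t" using Bs' by measurable
      show "(\<lambda>y. h y * indicator B y) \<in> borel_measurable \<nu>t" using Bs' hm' by measurable
      show "(\<integral>\<^sup>+ y. indicator B y \<partial>\<nu>t) \<noteq> \<infinity>" using Bs nut_sets by simp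
      show "AE x in \<nu>t. indicator B x \<le> h x * indicator B x"
        by (auto simp: B_def indicator_def less_imp_le)
      show "\<not> (AE x in \<nu>t. h x * indicator B x \<le> indicator B x)"
      proof
        assume "AE x in \<nu>t. h x * indicator B x \<le> indicator B x"
        then have "AE x in \<nu>t. x \<notin> B"
          by eventually_elim (auto simp: B_def indicator_def)
        then have "emeasure \<nu>t B = 0"
          using Bs nut_sets by (subst (asm) AE_iff_measurable[OF _ refl]) (auto simp: nutsp)
        then show False using nz by simp
      qed
    qed
    also have "\<dots> = ennreal (1 - \<delta>) * emeasure \<nu> B" using hA[OF Bs] .
    also have "\<dots> \<le> emeasure \<nu>t B" using nutA[OF Bs] .
    finally show False using Bs nut_sets by simp
  qed
  have hle: "AE y in \<nu>t. h y \<le> 1"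
  proof -
    have "AE y in \<nu>t. y \<notin> B"
      using B0 Bs nut_sets by (subst AE_iff_measurable[OF _ refl]) (auto simp: nutsp)
    then show ?thesis by eventually_elim (auto simp: B_def not_less)
  qed
  define w where "w = (\<lambda>y. min (h y) 1)"
  have wm: "w \<in> borel_measurable borel" unfolding w_def using hm by measurable
  have wle: "w y \<le> 1" for y unfolding w_def by simp
  have wh: "w y \<le> h y" for y unfolding w_def by simp
  have intw: "(\<integral>\<^sup>+ y. w y \<partial>\<nu>t) = ennreal (1 - \<delta>)"
  proof -
    have "(\<integral>\<^sup>+ y. w y \<partial>\<nu>t) = (\<integral>\<^sup>+ y. h y * indicator UNIV y \<partial>\<nu>t)"
      by (rule nn_integral_cong_AE) (use hle in \<open>auto simp: w_def\<close>)
    also have "\<dots> = ennreal (1 - \<delta>)" using hA[of UNIV] nu1 by simp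
    finally show ?thesis .
  qed
  have wm': "w \<in> borel_measurable \<nu>t" unfolding w_def using hm' by measurable
  have sm: "snd \<in> measurable \<gamma> (borel :: 'a measure)"
    using snd_meas measurable_cong_sets[OF gs refl] by blast
  define g2 where "g2 = distr \<gamma> (borel :: 'a measure) snd"
  have g2s: "sets g2 = sets (borel :: 'a measure)" unfolding g2_def by simp
  have g2A: "emeasure g2 A = emeasure \<gamma> (UNIV \<times> A)" if "A \<in> sets borel" for A
  proof -
    have "snd -` A \<inter> space \<gamma> = UNIV \<times> A" using gsp by auto
    then show ?thesis unfolding g2_def using emeasure_distr[OF sm that] by simp
  qed
  have g2le: "g2 \<le> \<nu>t"
    by (rule le_measure_setsI) (use g2s nut_sets g2A g2 in auto)
  have g2int: "(\<integral>\<^sup>+ y. f y \<partial>g2) = (\<integral>\<^sup>+ z. f (snd z) \<partial>\<gamma>)"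
    if "f \<in> borel_measurable borel" for f
  proof -
    have "f \<in> borel_measurable g2" using that measurable_cong_sets[OF g2s refl] by blast
    then show ?thesis unfolding g2_def by (rule nn_integral_distr[OF sm])
  qed
  have wsm: "(\<lambda>z. w (snd z)) \<in> borel_measurable \<gamma>" using wm sm by measurable
  define g' where "g' = density \<gamma> (\<lambda>z. w (snd z))"
  have g'X: "emeasure g' X = (\<integral>\<^sup>+ z. w (snd z) * indicator X z \<partial>\<gamma>)" if "X \<in> sets \<gamma>" for X
    unfolding g'_def by (rule emeasure_density[OF wsm that])
  define I where "I = (\<integral>\<^sup>+ y. w y \<partial>g2)"
  have g2sp: "space g2 = UNIV" unfolding g2_def by simp
  have one_g2: "(\<integral>\<^sup>+ y. 1 \<partial>g2) = ennreal (1 - \<epsilon>)"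
    using g2A[of UNIV] gm gsp g2sp by simp
  have one_nut: "(\<integral>\<^sup>+ y. 1 \<partial>\<nu>t) = 1"
    using nut1 nutsp by simp
  have split_g2: "I + (\<integral>\<^sup>+ y. (1 - w y) \<partial>g2) = ennreal (1 - \<epsilon>)"
  proof -
    have wg2: "w \<in> borel_measurable g2" using wm measurable_cong_sets[OF g2s refl] by blast
    have "I + (\<integral>\<^sup>+ y. (1 - w y) \<partial>g2) = (\<integral>\<^sup>+ y. w y + (1 - w y) \<partial>g2)"
      unfolding I_def by (rule nn_integral_add[symmetric]) (use wg2 in measurable)
    also have "\<dots> = (\<integral>\<^sup>+ y. 1 \<partial>g2)"
      by (rule nn_integral_cong) (simp add: add_diff_inverse_ennreal[OF wle])
    finally show ?thesis using one_g2 by simp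
  qed
  have split_nut: "ennreal (1 - \<delta>) + (\<integral>\<^sup>+ y. (1 - w y) \<partial>\<nu>t) = 1"
  proof -
    have "ennreal (1 - \<delta>) + (\<integral>\<^sup>+ y. (1 - w y) \<partial>\<nu>t) = (\<integral>\<^sup>+ y. w y + (1 - w y) \<partial>\<nu>t)"
      unfolding intw[symmetric] by (rule nn_integral_add[symmetric]) (use wm' in measurable)
    also have "\<dots> = (\<integral>\<^sup>+ y. 1 \<partial>\<nu>t)"
      by (rule nn_integral_cong) (simp add: add_diff_inverse_ennreal[OF wle])
    finally show ?thesis using one_nut by simp
  qed
  have Jt: "(\<integral>\<^sup>+ y. (1 - w y) \<partial>\<nu>t) = ennreal \<delta>"
  proof -
    have "ennreal (1 - \<delta>) + (\<integral>\<^sup>+ y. (1 - w y) \<partial>\<nu>t) = ennreal (1 - \<delta>) + ennreal \<delta>"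
      using split_nut delta by (simp add: ennreal_plus[symmetric] del: ennreal_plus)
    then show ?thesis by (simp add: ennreal_add_left_cancel)
  qed
  have J: "(\<integral>\<^sup>+ y. (1 - w y) \<partial>g2) \<le> ennreal \<delta>"
    using nn_integral_mono_measure[OF _ g2le, of "\<lambda>y. 1 - w y"] g2s nut_sets Jt by simp
  have Ile: "I \<le> ennreal (1 - \<epsilon>)" using split_g2 by (metis le_iff_add)
  define m where "m = enn2real I"
  have Im: "I = ennreal m" unfolding m_def using le_less_trans[OF Ile ennreal_less_top] by simp
  have m0: "0 \<le> m" unfolding m_def by simp
  have m1: "m \<le> 1 - \<epsilon>" using Ile Im eps delta by (simp add: ennreal_le_iff)
  have m2: "1 - \<epsilon> \<le> m + \<delta>"
  proof -
    have "ennreal (1 - \<epsilon>) \<le> ennreal m + ennreal \<delta>"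
      using split_g2 J Im by (metis add_left_mono)
    then show ?thesis using m0 delta by (simp add: ennreal_plus[symmetric] del: ennreal_plus)
  qed
  define r where "r = (1 - (\<epsilon> + \<delta>)) / m"
  have r0: "0 \<le> r" unfolding r_def using m0 eps by simp
  have r1: "r \<le> 1" unfolding r_def using m0 m2 by (auto simp add: divide_le_eq_1)
  have rm: "r * m = 1 - (\<epsilon> + \<delta>)"
  proof (cases "m = 0")
    case True then show ?thesis using m2 eps unfolding r_def by simp
  next
    case False then show ?thesis unfolding r_def by simp
  qed
  define g'' where "g'' = scale_measure (ennreal r) g'"
  have g''s: "sets g'' = sets borel" unfolding g''_def g'_def using gs by simp
  have g''sp: "space g'' = UNIV" using sets_eq_imp_space_eq[OF g''s] by simp
  have g'UNIV: "emeasure g' UNIV = I"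
    unfolding I_def using g'X[of UNIV] g2int[OF wm] gsp sets.top[of \<gamma>] by simp
  have mass: "emeasure g'' (space g'') = ennreal (1 - (\<epsilon> + \<delta>))"
    unfolding g''sp unfolding g''_def using g'UNIV Im r0 m0 rm by (simp add: ennreal_mult[symmetric])
  have g''X: "emeasure g'' X \<le> emeasure g' X" for X
  proof -
    have "ennreal r \<le> 1" using r1 by (simp add: ennreal_le_1)
    then have "ennreal r * emeasure g' X \<le> 1 * emeasure g' X" by (rule mult_right_mono) simp
    then show ?thesis unfolding g''_def by simp
  qed
  have g'le: "emeasure g' X \<le> emeasure \<gamma> X" if "X \<in> sets \<gamma>" for X
  proof -
    have "emeasure g' X \<le> (\<integral>\<^sup>+ z. indicator X z \<partial>\<gamma>)"
      unfolding g'X[OF that] by (rule nn_integral_mono) (simp add: indicator_def wle)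
    then show ?thesis using that by simp
  qed
  have g''le: "g'' \<le> \<gamma>"
  proof (rule le_measure_setsI)
    show "sets g'' = sets \<gamma>" using g''s gs by simp
    fix X assume "X \<in> sets g''"
    then have "X \<in> sets \<gamma>" using g''s gs by simp
    then show "emeasure g'' X \<le> emeasure \<gamma> X" using g''X[of X] g'le[of X] by (meson order_trans)
  qed
  have plan'': "partial_plan (1 - (\<epsilon> + \<delta>)) \<mu> \<nu> g''"
    unfolding partial_plan_def
  proof (intro conjI ballI)
    show "sets g'' = sets borel" by (rule g''s)
    show "emeasure g'' (space g'') = ennreal (1 - (\<epsilon> + \<delta>))" by (rule mass)
  next
    fix A :: "'a set" assume A: "A \<in> sets borel"
    have AX: "A \<times> UNIV \<in> sets \<gamma>" using A gs by (simp add: borel_Times)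
    show "emeasure g'' (A \<times> UNIV) \<le> emeasure \<mu> A"
      using g''X[of "A \<times> UNIV"] g'le[OF AX] g1[OF A] by (meson order_trans)
  next
    fix A :: "'a set" assume A: "A \<in> sets borel"
    have AX: "UNIV \<times> A \<in> sets \<gamma>" using A gs by (simp add: borel_Times)
    have "emeasure g' (UNIV \<times> A) = (\<integral>\<^sup>+ z. w (snd z) * indicator A (snd z) \<partial>\<gamma>)"
      unfolding g'X[OF AX] by (rule nn_integral_cong) (auto simp: indicator_def)
    also have "\<dots> = (\<integral>\<^sup>+ y. w y * indicator A y \<partial>g2)"
      by (rule g2int[symmetric]) (use wm A in measurable)
    also have "\<dots> \<le> (\<integral>\<^sup>+ y. w y * indicator A y \<partial>\<nu>t)"
      by (rule nn_integral_mono_measure[OF _ g2le]) (simp add: g2s nut_sets)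
    also have "\<dots> \<le> (\<integral>\<^sup>+ y. h y * indicator A y \<partial>\<nu>t)"
      by (rule nn_integral_mono) (simp add: wh mult_right_mono)
    also have "\<dots> = ennreal (1 - \<delta>) * emeasure \<nu> A" by (rule hA[OF A])
    also have "\<dots> \<le> 1 * emeasure \<nu> A"
      by (rule mult_right_mono) (use delta in \<open>auto simp: ennreal_le_1\<close>)
    finally show "emeasure g'' (UNIV \<times> A) \<le> emeasure \<nu> A"
      using g''X[of "UNIV \<times> A"] by simp
  qed
  have "plan_cost p g'' \<le> plan_cost p \<gamma>"
    by (rule cost_mono[OF diam p]) (use g''s gs g''le gm in auto)
  then show ?thesis using plan'' by blast
qed

lemma KU:
  fixes \<mu> \<nu> \<nu>t :: "'a::metric_space measure" and \<gamma> :: "('a \<times> 'a) measure"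
  assumes diam: "\<forall>x y :: 'a. dist x y \<le> 1" and p: "p > 0"
    and delta: "0 < \<delta>" "\<delta> < 1"
    and nut: "\<forall>A \<in> sets (borel :: 'a measure).
               emeasure \<nu>t A = ennreal (1 - \<delta>) * emeasure \<nu> A + ennreal \<delta> * emeasure \<nu>' A"
    and eps: "0 \<le> \<epsilon>" "\<epsilon> \<le> 1"
    and plan: "partial_plan (1 - \<epsilon>) \<mu> \<nu> \<gamma>"
  shows "partial_plan ((1 - \<delta>) * (1 - \<epsilon>)) \<mu> \<nu>t (scale_measure (ennreal (1 - \<delta>)) \<gamma>)
     \<and> plan_cost p (scale_measure (ennreal (1 - \<delta>)) \<gamma>) \<le> plan_cost p \<gamma>"
proof -
  have gs: "sets \<gamma> = sets borel" and gm: "emeasure \<gamma> (space \<gamma>) = ennreal (1 - \<epsilon>)"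
    and g1: "\<And>A. A \<in> sets borel \<Longrightarrow> emeasure \<gamma> (A \<times> UNIV) \<le> emeasure \<mu> A"
    and g2: "\<And>A. A \<in> sets borel \<Longrightarrow> emeasure \<gamma> (UNIV \<times> A) \<le> emeasure \<nu> A"
    using plan unfolding partial_plan_def by auto
  let ?g = "scale_measure (ennreal (1 - \<delta>)) \<gamma>"
  have d1: "ennreal (1 - \<delta>) \<le> 1" using delta by (simp add: ennreal_le_1)
  have le: "emeasure ?g X \<le> emeasure \<gamma> X" for X
    using mult_right_mono[OF d1, of "emeasure \<gamma> X"] by simp
  have gle: "?g \<le> \<gamma>" by (rule le_measure_setsI) (use le in auto)
  have "partial_plan ((1 - \<delta>) * (1 - \<epsilon>)) \<mu> \<nu>t ?g"
    unfolding partial_plan_def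
  proof (intro conjI ballI)
    show "sets ?g = sets borel" using gs by simp
    show "emeasure ?g (space ?g) = ennreal ((1 - \<delta>) * (1 - \<epsilon>))"
      using gm delta eps by (simp add: space_scale_measure ennreal_mult[symmetric])
  next
    fix A :: "'a set" assume A: "A \<in> sets borel"
    show "emeasure ?g (A \<times> UNIV) \<le> emeasure \<mu> A" using le[of "A \<times> UNIV"] g1[OF A] by (meson order_trans)
  next
    fix A :: "'a set" assume A: "A \<in> sets borel"
    have "emeasure ?g (UNIV \<times> A) \<le> ennreal (1 - \<delta>) * emeasure \<nu> A"
      using mult_left_mono[OF g2[OF A]] by simp
    also have "\<dots> \<le> emeasure \<nu>t A" using nut A by (metis le_iff_add)
    finally show "emeasure ?g (UNIV \<times> A) \<le> emeasure \<nu>t A" .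
  qed
  moreover have "plan_cost p ?g \<le> plan_cost p \<gamma>"
    by (rule cost_mono[OF diam p]) (use gs gle gm in auto)
  ultimately show ?thesis by blast
qed

lemma RPW_basic:
  fixes \<mu> \<nu> :: "'a::metric_space measure"
  assumes p: "p > 0" and k: "k \<ge> 0"
  shows "1 \<in> {\<epsilon> \<in> {0..1}. partial_W p (1 - \<epsilon>) \<mu> \<nu> \<le> ennreal (k * \<epsilon>)}"
    and "bdd_below {\<epsilon> \<in> {0..1}. partial_W p (1 - \<epsilon>) \<mu> \<nu> \<le> ennreal (k * \<epsilon>)}"
    and "0 \<le> RPW p k \<mu> \<nu>" and "RPW p k \<mu> \<nu> \<le> 1"
proof -
  let ?S = "{\<epsilon> \<in> {0..1}. partial_W p (1 - \<epsilon>) \<mu> \<nu> \<le> ennreal (k * \<epsilon>)}"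
  let ?z = "null_measure (borel :: ('a \<times> 'a) measure)"
  have pz: "partial_plan 0 \<mu> \<nu> ?z" unfolding partial_plan_def by simp
  have cz: "plan_cost p ?z = 0" unfolding plan_cost_def using p by simp
  have "partial_W p 0 \<mu> \<nu> \<le> ennreal (plan_cost p ?z)"
    unfolding partial_W_def by (rule INF_lower) (use pz in simp)
  then have "partial_W p 0 \<mu> \<nu> \<le> 0" using cz by simp
  then show one: "1 \<in> ?S" using k by (simp add: order_trans)
  show bdd: "bdd_below ?S" by (rule bdd_belowI[of _ 0]) auto
  show "0 \<le> RPW p k \<mu> \<nu>" unfolding RPW_def by (rule cInf_greatest) (use one in auto)
  show "RPW p k \<mu> \<nu> \<le> 1" unfolding RPW_def by (rule cInf_lower[OF one bdd])
qed

theorem theorem3p1: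
  fixes \<mu> \<nu> \<nu>' \<nu>t :: "'a::metric_space measure"
    and p k \<delta> :: real
  assumes diam: "\<forall>x y :: 'a. dist x y \<le> 1"
    and mu: "prob_space \<mu>" "sets \<mu> = sets (borel :: 'a measure)"
    and nu: "prob_space \<nu>" "sets \<nu> = sets (borel :: 'a measure)"
    and nu': "prob_space \<nu>'" "sets \<nu>' = sets (borel :: 'a measure)"
    and p: "p \<ge> 1" and k: "k \<ge> 0" and delta: "0 < \<delta>" "\<delta> < 1"
    and nut_sets: "sets \<nu>t = sets (borel :: 'a measure)"
    and nut: "\<forall>A \<in> sets (borel :: 'a measure).
               emeasure \<nu>t A = ennreal (1 - \<delta>) * emeasure \<nu> A + ennreal \<delta> * emeasure \<nu>' A"
  shows "RPW p k \<mu> \<nu> - \<delta> \<le> RPW p k \<mu> \<nu>t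
         \<and> RPW p k \<mu> \<nu>t \<le> (1 - \<delta>) * RPW p k \<mu> \<nu> + \<delta>"
proof
  have p0: "p > 0" using p by simp
  let ?S = "\<lambda>\<nu>0. {\<epsilon> \<in> {0..1}. partial_W p (1 - \<epsilon>) \<mu> \<nu>0 \<le> ennreal (k * \<epsilon>)}"
  have R: "RPW p k \<mu> \<nu>0 = Inf (?S \<nu>0)" for \<nu>0 unfolding RPW_def ..
  note B = RPW_basic[OF p0 k]
  show "RPW p k \<mu> \<nu> - \<delta> \<le> RPW p k \<mu> \<nu>t"
  proof -
    have "RPW p k \<mu> \<nu> - \<delta> \<le> Inf (?S \<nu>t)"
    proof (rule cInf_greatest)
      show "?S \<nu>t \<noteq> {}" using B(1) by blast
      fix \<epsilon> assume e: "\<epsilon> \<in> ?S \<nu>t"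
      show "RPW p k \<mu> \<nu> - \<delta> \<le> \<epsilon>"
      proof (cases "\<epsilon> + \<delta> \<le> 1")
        case False then show ?thesis using B(4)[of \<mu> \<nu>] by simp
      next
        case True
        have "partial_W p (1 - (\<epsilon> + \<delta>)) \<mu> \<nu> \<le> partial_W p (1 - \<epsilon>) \<mu> \<nu>t"
          unfolding partial_W_def
        proof (rule INF_mono)
          fix \<gamma> assume "\<gamma> \<in> {\<gamma>. partial_plan (1 - \<epsilon>) \<mu> \<nu>t \<gamma>}"
          then obtain \<gamma>'' where "partial_plan (1 - (\<epsilon> + \<delta>)) \<mu> \<nu> \<gamma>''" "plan_cost p \<gamma>'' \<le> plan_cost p \<gamma>"
            using KL[OF diam p0 nu nu' delta nut_sets nut, of \<epsilon> \<mu> \<gamma>] e True by auto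
          then show "\<exists>\<gamma>'\<in>{\<gamma>. partial_plan (1 - (\<epsilon> + \<delta>)) \<mu> \<nu> \<gamma>}. ennreal (plan_cost p \<gamma>') \<le> ennreal (plan_cost p \<gamma>)"
            by (auto intro: ennreal_leI)
        qed
        also have "\<dots> \<le> ennreal (k * \<epsilon>)" using e by simp
        also have "\<dots> \<le> ennreal (k * (\<epsilon> + \<delta>))" using k delta by (intro ennreal_leI) (simp add: distrib_left)
        finally have "\<epsilon> + \<delta> \<in> ?S \<nu>" using e True delta by auto
        then have "RPW p k \<mu> \<nu> \<le> \<epsilon> + \<delta>" unfolding R by (rule cInf_lower[OF _ B(2)])
        then show ?thesis by simp
      qed
    qed
    then show ?thesis unfolding R .
  qed
next
  have p0: "p > 0" using p by simp
  let ?S = "\<lambda>\<nu>0. {\<epsilon> \<in> {0..1}. partial_W p (1 - \<epsilon>) \<mu> \<nu>0 \<le> ennreal (k * \<epsilon>)}"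
  have R: "RPW p k \<mu> \<nu>0 = Inf (?S \<nu>0)" for \<nu>0 unfolding RPW_def ..
  note B = RPW_basic[OF p0 k]
  have "(RPW p k \<mu> \<nu>t - \<delta>) / (1 - \<delta>) \<le> Inf (?S \<nu>)"
  proof (rule cInf_greatest)
    show "?S \<nu> \<noteq> {}" using B(1) by blast
    fix \<epsilon> assume e: "\<epsilon> \<in> ?S \<nu>"
    define e' where "e' = (1 - \<delta>) * \<epsilon> + \<delta>"
    have e'eq: "1 - e' = (1 - \<delta>) * (1 - \<epsilon>)" unfolding e'_def by (simp add: algebra_simps)
    have e0: "0 \<le> \<epsilon>" "\<epsilon> \<le> 1" using e by auto
    have "partial_W p (1 - e') \<mu> \<nu>t \<le> partial_W p (1 - \<epsilon>) \<mu> \<nu>"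
      unfolding partial_W_def e'eq
    proof (rule INF_mono)
      fix \<gamma> assume "\<gamma> \<in> {\<gamma>. partial_plan (1 - \<epsilon>) \<mu> \<nu> \<gamma>}"
      then have "partial_plan ((1 - \<delta>) * (1 - \<epsilon>)) \<mu> \<nu>t (scale_measure (ennreal (1 - \<delta>)) \<gamma>)
         \<and> plan_cost p (scale_measure (ennreal (1 - \<delta>)) \<gamma>) \<le> plan_cost p \<gamma>"
        using KU[OF diam p0 delta nut e0] by auto
      then show "\<exists>\<gamma>'\<in>{\<gamma>. partial_plan ((1 - \<delta>) * (1 - \<epsilon>)) \<mu> \<nu>t \<gamma>}. ennreal (plan_cost p \<gamma>') \<le> ennreal (plan_cost p \<gamma>)"
        by (auto intro: ennreal_leI)
    qed
    also have "\<dots> \<le> ennreal (k * \<epsilon>)" using e by simp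
    also have "\<dots> \<le> ennreal (k * e')"
    proof (intro ennreal_leI mult_left_mono[OF _ k])
      have "\<delta> * \<epsilon> \<le> \<delta>" using e0 delta by (simp add: mult_left_le)
      then show "\<epsilon> \<le> e'" unfolding e'_def by (simp add: algebra_simps)
    qed
    finally have "e' \<in> ?S \<nu>t"
    proof -
      assume h: "partial_W p (1 - e') \<mu> \<nu>t \<le> ennreal (k * e')"
      have a: "0 \<le> (1 - \<delta>) * \<epsilon>" using e0 delta by simp
      have b: "(1 - \<delta>) * \<epsilon> \<le> 1 - \<delta>" using mult_left_mono[of \<epsilon> 1 "1 - \<delta>"] e0 delta by simp
      have "0 \<le> e'" "e' \<le> 1" unfolding e'_def using a b delta by linarith+
      then show ?thesis using h by auto
    qed
    then have "RPW p k \<mu> \<nu>t \<le> e'" unfolding R by (rule cInf_lower[OF _ B(2)])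
    then show "(RPW p k \<mu> \<nu>t - \<delta>) / (1 - \<delta>) \<le> \<epsilon>"
      using delta unfolding e'_def by (simp add: pos_divide_le_eq algebra_simps)
  qed
  then have "(RPW p k \<mu> \<nu>t - \<delta>) / (1 - \<delta>) \<le> RPW p k \<mu> \<nu>" unfolding R .
  then show "RPW p k \<mu> \<nu>t \<le> (1 - \<delta>) * RPW p k \<mu> \<nu> + \<delta>"
    using delta by (simp add: pos_divide_le_eq algebra_simps)
qed

end
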